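(* If $K\subseteq\mathbb{R}^d$ is a pointwise Whitney regular compact set, then $(\mathcal{J}^1(K),\|\cdot\|_{\mathcal{J}^1(K)})$ is complete.
   Context: A continuous $df:K\to\mathbb{R}^d$ is a continuous derivative of $f:K\to\mathbb{R}$ on $K$ if $\lim_{y\to x,\,y\in K\setminus\{x\}}\frac{f(y)-f(x)-\langle df(x),y-x\rangle}{|y-x|}=0$ for all $x\in K$. The jet space is $\mathcal{J}^1(K)=\{(f,df): df \text{ is a continuous derivative of } f \text{ on } K\}$ (so $f$ is continuous) with norm $\|(f,df)\|_{\mathcal{J}^1(K)}=\|f\|_K+\|df\|_K$, $\|\cdot\|_K$ the sup norm on $K$. $K$ is pointwise Whitney regular if for every $x\in K$ there are a neighbourhood $V_x$ of $x$ and $C_x>0$ such that every $y\in V_x\cap K$ is joined to $x$ by a rectifiable path in $K$ of length at most $C_x|x-y|$ (a rectifiable path is a continuous map $\gamma:[a,b]\to K$ of finite length $\sup\sum_j|\gamma(t_j)-\gamma(t_{j-1})|$). *)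

theory Defs
  imports "HOL-Analysis.Analysis"
begin

text \<open>R^d is modelled by an arbitrary euclidean space 'a (dimension DIM('a)).
  A function K \<rightarrow> R is modelled by f :: 'a \<Rightarrow> real; only its values on K matter.\<close>

definition sup_norm_on :: "'a set \<Rightarrow> ('a \<Rightarrow> 'b::real_normed_vector) \<Rightarrow> real" where
  "sup_norm_on K g = (if K = {} then 0 else (SUP x\<in>K. norm (g x)))"

definition is_cont_deriv_on :: "'a::euclidean_space set \<Rightarrow> ('a \<Rightarrow> real) \<Rightarrow> ('a \<Rightarrow> 'a) \<Rightarrow> bool" where
  "is_cont_deriv_on K f df \<longleftrightarrow> continuous_on K df \<and>
     (\<forall>x\<in>K. ((\<lambda>y. (f y - f x - inner (df x) (y - x)) / norm (y - x)) \<longlongrightarrow> 0) (at x within K))"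

definition jet_space :: "'a::euclidean_space set \<Rightarrow> (('a \<Rightarrow> real) \<times> ('a \<Rightarrow> 'a)) set" where
  "jet_space K = {(f, df). continuous_on K f \<and> is_cont_deriv_on K f df}"

definition jet_norm :: "'a::euclidean_space set \<Rightarrow> ('a \<Rightarrow> real) \<times> ('a \<Rightarrow> 'a) \<Rightarrow> real" where
  "jet_norm K F = sup_norm_on K (fst F) + sup_norm_on K (snd F)"

definition partition_sums :: "(real \<Rightarrow> 'a::metric_space) \<Rightarrow> real \<Rightarrow> real \<Rightarrow> real set" where
  "partition_sums \<gamma> a b = {(\<Sum>j\<in>{1..n}. dist (\<gamma> (t j)) (\<gamma> (t (j - 1)))) | n t.
      t 0 = a \<and> t n = b \<and> (\<forall>j<n. t j \<le> t (Suc j))}"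

definition path_length :: "(real \<Rightarrow> 'a::metric_space) \<Rightarrow> real \<Rightarrow> real \<Rightarrow> real" where
  "path_length \<gamma> a b = Sup (partition_sums \<gamma> a b)"

definition rectifiable_path_in :: "'a::metric_space set \<Rightarrow> (real \<Rightarrow> 'a) \<Rightarrow> real \<Rightarrow> real \<Rightarrow> bool" where
  "rectifiable_path_in K \<gamma> a b \<longleftrightarrow> a \<le> b \<and> continuous_on {a..b} \<gamma> \<and> \<gamma> ` {a..b} \<subseteq> K
     \<and> bdd_above (partition_sums \<gamma> a b)"

definition pointwise_whitney_regular :: "'a::euclidean_space set \<Rightarrow> bool" where
  "pointwise_whitney_regular K \<longleftrightarrow> (\<forall>x\<in>K. \<exists>V C. open V \<and> x \<in> V \<and> C > 0 \<and>
     (\<forall>y\<in>V \<inter> K. \<exists>\<gamma> a b. rectifiable_path_in K \<gamma> a b \<and> \<gamma> a = x \<and> \<gamma> b = y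
        \<and> path_length \<gamma> a b \<le> C * dist x y))"

end

theory Submission
  imports Defs
begin

lemma partition_sums_extend:
  assumes "S \<in> partition_sums \<gamma> a t" "t \<le> u"
  shows "S + dist (\<gamma> u) (\<gamma> t) \<in> partition_sums \<gamma> a u"
proof -
  obtain n tt where S: "S = (\<Sum>j\<in>{1..n}. dist (\<gamma> (tt j)) (\<gamma> (tt (j - 1))))"
    and t0: "tt 0 = a" and tn: "tt n = t" and mono: "\<forall>j<n. tt j \<le> tt (Suc j)"
    using assms(1) unfolding partition_sums_def by blast
  define tt' where "tt' = tt(Suc n := u)"
  have e1: "(\<Sum>j\<in>{1..n}. dist (\<gamma> (tt' j)) (\<gamma> (tt' (j - 1)))) = S"
    unfolding S by (rule sum.cong) (auto simp: tt'_def)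
  have "(\<Sum>j\<in>{1..Suc n}. dist (\<gamma> (tt' j)) (\<gamma> (tt' (j - 1)))) = S + dist (\<gamma> u) (\<gamma> t)"
    using e1 tn by (simp add: tt'_def)
  moreover have "tt' 0 = a" "tt' (Suc n) = u" using t0 by (auto simp: tt'_def)
  moreover have "\<forall>j<Suc n. tt' j \<le> tt' (Suc j)"
    using mono tn assms(2) by (auto simp: tt'_def less_Suc_eq)
  ultimately show ?thesis unfolding partition_sums_def
    by (intro CollectI exI[of _ "Suc n"] exI[of _ tt']) simp
qed

lemma partition_sums_triv: "0 \<in> partition_sums \<gamma> a a"
  unfolding partition_sums_def by (rule CollectI, rule exI[of _ 0], rule exI[of _ "\<lambda>_. a"]) simp

lemma MVI:
  fixes h :: "'a::euclidean_space \<Rightarrow> real"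
  assumes deriv: "\<forall>x\<in>K. ((\<lambda>y. (h y - h x - inner (dh x) (y - x)) / norm (y - x)) \<longlongrightarrow> 0) (at x within K)"
    and bound: "\<forall>x\<in>K. norm (dh x) \<le> M"
    and rp: "rectifiable_path_in K \<gamma> a b"
  shows "\<bar>h (\<gamma> b) - h (\<gamma> a)\<bar> \<le> M * path_length \<gamma> a b"
proof -
  have ab: "a \<le> b" and cg: "continuous_on {a..b} \<gamma>" and img: "\<gamma> ` {a..b} \<subseteq> K"
    and bdd: "bdd_above (partition_sums \<gamma> a b)"
    using rp unfolding rectifiable_path_in_def by auto
  have Lup: "\<And>S. S \<in> partition_sums \<gamma> a b \<Longrightarrow> S \<le> path_length \<gamma> a b"
    unfolding path_length_def using bdd by (simp add: cSup_upper)
  have "0 + dist (\<gamma> b) (\<gamma> a) \<in> partition_sums \<gamma> a b"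
    by (rule partition_sums_extend[OF partition_sums_triv ab])
  hence "dist (\<gamma> b) (\<gamma> a) \<le> path_length \<gamma> a b" using Lup by simp
  hence L0: "0 \<le> path_length \<gamma> a b" by (rule order_trans[OF zero_le_dist])
  have "\<gamma> a \<in> K" using img ab by auto
  hence "norm (dh (\<gamma> a)) \<le> M" using bound by blast
  hence M0: "0 \<le> M" by (meson norm_ge_zero order_trans)
  have key: "\<bar>h (\<gamma> b) - h (\<gamma> a)\<bar> \<le> (M + \<epsilon>) * path_length \<gamma> a b" if \<epsilon>: "\<epsilon> > 0" for \<epsilon>
  proof -
    define P where "P t \<longleftrightarrow> (\<exists>S\<in>partition_sums \<gamma> a t. \<bar>h (\<gamma> t) - h (\<gamma> a)\<bar> \<le> (M+\<epsilon>)*S)" for t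
    have local: "\<exists>\<delta>>0. \<forall>u\<in>{a..b}. dist u s < \<delta> \<longrightarrow> \<bar>h (\<gamma> u) - h (\<gamma> s)\<bar> \<le> (M+\<epsilon>) * dist (\<gamma> u) (\<gamma> s)"
      if s: "s \<in> {a..b}" for s
    proof -
      define x where "x = \<gamma> s"
      have xK: "x \<in> K" using s img x_def by auto
      obtain \<rho> where \<rho>: "\<rho> > 0" and \<rho>b: "\<forall>y\<in>K. 0 < dist y x \<and> dist y x < \<rho> \<longrightarrow>
          dist ((h y - h x - inner (dh x) (y - x)) / norm (y - x)) 0 < \<epsilon>"
        using deriv[rule_format, OF xK] \<epsilon> unfolding Lim_within by blast
      have hy: "\<bar>h y - h x\<bar> \<le> (M+\<epsilon>) * dist y x" if y: "y \<in> K" "dist y x < \<rho>" for y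
      proof (cases "y = x")
        case True then show ?thesis by simp
      next
        case False
        hence n0: "norm (y - x) > 0" by simp
        have "\<bar>(h y - h x - inner (dh x) (y - x)) / norm (y - x)\<bar> < \<epsilon>"
          using \<rho>b y False by auto
        hence 1: "\<bar>h y - h x - inner (dh x) (y - x)\<bar> \<le> \<epsilon> * norm (y - x)"
          using n0 by (simp add: abs_divide divide_less_eq less_imp_le)
        have 2: "\<bar>inner (dh x) (y - x)\<bar> \<le> M * norm (y - x)"
          using Cauchy_Schwarz_ineq2[of "dh x" "y - x"] bound xK
          by (meson mult_right_mono norm_ge_zero order_trans)
        have "\<bar>h y - h x\<bar> \<le> \<bar>h y - h x - inner (dh x) (y - x)\<bar> + \<bar>inner (dh x) (y - x)\<bar>" by linarith
        also have "\<dots> \<le> (M+\<epsilon>) * norm (y - x)" using 1 2 by (simp add: distrib_right)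
        finally show ?thesis by (simp add: dist_norm)
      qed
      obtain \<delta> where \<delta>: "\<delta> > 0" and \<delta>b: "\<forall>u\<in>{a..b}. dist u s < \<delta> \<longrightarrow> dist (\<gamma> u) (\<gamma> s) < \<rho>"
        using cg s \<rho> unfolding continuous_on_iff by blast
      show ?thesis
        using \<delta> \<delta>b hy img x_def by (intro exI[of _ \<delta>]) auto
    qed
    define A where "A = {t\<in>{a..b}. P t}"
    have "P a" unfolding P_def using partition_sums_triv[of \<gamma> a] by (intro bexI[of _ 0]) auto
    hence aA: "a \<in> A" using ab by (simp add: A_def)
    have bddA: "bdd_above A" unfolding A_def by (rule bdd_aboveI[of _ b]) auto
    define s where "s = Sup A"
    have as: "a \<le> s" unfolding s_def using aA bddA by (simp add: cSup_upper)
    have sb: "s \<le> b" unfolding s_def using aA by (intro cSup_least) (auto simp: A_def)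
    obtain \<delta> where \<delta>: "\<delta> > 0" and \<delta>b: "\<forall>u\<in>{a..b}. dist u s < \<delta> \<longrightarrow> \<bar>h (\<gamma> u) - h (\<gamma> s)\<bar> \<le> (M+\<epsilon>) * dist (\<gamma> u) (\<gamma> s)"
      using local[of s] as sb by auto
    obtain t where tA: "t \<in> A" and ts: "s - \<delta> < t"
      using less_cSupD[of A "s - \<delta>"] aA \<delta> unfolding s_def by auto
    have tle: "t \<le> s" unfolding s_def using tA bddA by (simp add: cSup_upper)
    have ext: "u \<in> A" if u: "u \<in> {a..b}" "s \<le> u" "u < s + \<delta>" for u
    proof -
      obtain S where S: "S \<in> partition_sums \<gamma> a t" and Sb: "\<bar>h (\<gamma> t) - h (\<gamma> a)\<bar> \<le> (M+\<epsilon>)*S"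
        using tA unfolding A_def P_def by auto
      have t_ab: "t \<in> {a..b}" using tA A_def by auto
      have d1: "\<bar>h (\<gamma> t) - h (\<gamma> s)\<bar> \<le> (M+\<epsilon>) * dist (\<gamma> t) (\<gamma> s)"
        using \<delta>b t_ab ts tle by (auto simp: dist_real_def)
      have d2: "\<bar>h (\<gamma> u) - h (\<gamma> s)\<bar> \<le> (M+\<epsilon>) * dist (\<gamma> u) (\<gamma> s)"
        using \<delta>b u by (auto simp: dist_real_def)
      have S1: "S + dist (\<gamma> s) (\<gamma> t) \<in> partition_sums \<gamma> a s"
        by (rule partition_sums_extend[OF S tle])
      have S2: "S + dist (\<gamma> s) (\<gamma> t) + dist (\<gamma> u) (\<gamma> s) \<in> partition_sums \<gamma> a u"
        by (rule partition_sums_extend[OF S1 u(2)])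
      have "\<bar>h (\<gamma> u) - h (\<gamma> a)\<bar> \<le> \<bar>h (\<gamma> t) - h (\<gamma> a)\<bar> + \<bar>h (\<gamma> t) - h (\<gamma> s)\<bar> + \<bar>h (\<gamma> u) - h (\<gamma> s)\<bar>"
        by linarith
      also have "\<dots> \<le> (M+\<epsilon>) * (S + dist (\<gamma> s) (\<gamma> t) + dist (\<gamma> u) (\<gamma> s))"
        using Sb d1 d2 by (simp add: distrib_left dist_commute)
      finally show ?thesis using S2 u unfolding A_def P_def by blast
    qed
    have "s = b"
    proof (rule ccontr)
      assume "s \<noteq> b"
      hence "s < b" using sb by simp
      hence "min b (s + \<delta>/2) \<in> A" using ext[of "min b (s + \<delta>/2)"] as \<delta> by auto
      hence "min b (s + \<delta>/2) \<le> s" unfolding s_def using bddA by (simp add: cSup_upper)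
      thus False using \<open>s < b\<close> \<delta> by linarith
    qed
    hence "b \<in> A" using ext[of b] ab \<delta> by auto
    then obtain S where S: "S \<in> partition_sums \<gamma> a b" and Sb: "\<bar>h (\<gamma> b) - h (\<gamma> a)\<bar> \<le> (M+\<epsilon>)*S"
      unfolding A_def P_def by auto
    have "(M+\<epsilon>)*S \<le> (M+\<epsilon>) * path_length \<gamma> a b"
      using Lup[OF S] M0 \<epsilon> by (intro mult_left_mono) auto
    with Sb show ?thesis by linarith
  qed
  show ?thesis
  proof (cases "path_length \<gamma> a b = 0")
    case True thus ?thesis using key[of 1] by simp
  next
    case False
    hence Lp: "path_length \<gamma> a b > 0" using L0 by simp
    show ?thesis
    proof (rule field_le_epsilon)
      fix e :: real assume e: "0 < e"
      have "\<bar>h (\<gamma> b) - h (\<gamma> a)\<bar> \<le> (M + e / path_length \<gamma> a b) * path_length \<gamma> a b"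
        using key[of "e / path_length \<gamma> a b"] e Lp by simp
      also have "\<dots> = M * path_length \<gamma> a b + e" using Lp by (simp add: distrib_right)
      finally show "\<bar>h (\<gamma> b) - h (\<gamma> a)\<bar> \<le> M * path_length \<gamma> a b + e" .
    qed
  qed
qed

lemma sup_norm_ge:
  assumes "continuous_on K g" "compact K" "x \<in> K"
  shows "norm (g x) \<le> sup_norm_on K g"
proof -
  have "compact ((\<lambda>x. norm (g x)) ` K)"
    by (rule compact_continuous_image) (auto intro: continuous_intros assms)
  hence "bdd_above ((\<lambda>x. norm (g x)) ` K)" by (simp add: bounded_imp_bdd_above compact_imp_bounded)
  thus ?thesis using assms(3) unfolding sup_norm_on_def by (auto intro: cSUP_upper)
qed

lemma sup_norm_nonneg:
  assumes "continuous_on K g" "compact K"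
  shows "0 \<le> sup_norm_on K g"
proof (cases "K = {}")
  case True thus ?thesis by (simp add: sup_norm_on_def)
next
  case False
  then obtain x where "x \<in> K" by auto
  thus ?thesis using sup_norm_ge[OF assms] norm_ge_zero order_trans by metis
qed

lemma sup_norm_le:
  assumes "\<forall>x\<in>K. norm (g x) \<le> B" "0 \<le> B"
  shows "sup_norm_on K g \<le> B"
  using assms unfolding sup_norm_on_def by (auto intro: cSUP_least)

lemma deriv_diff:
  assumes "((\<lambda>y. (f1 y - f1 x - inner (d1 x) (y - x)) / norm (y - x)) \<longlongrightarrow> 0) F"
    and "((\<lambda>y. (f2 y - f2 x - inner (d2 x) (y - x)) / norm (y - x)) \<longlongrightarrow> 0) F"
  shows "((\<lambda>y. ((f1 y - f2 y) - (f1 x - f2 x) - inner (d1 x - d2 x) (y - x)) / norm (y - x)) \<longlongrightarrow> 0) F"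
proof -
  have "((\<lambda>y. (f1 y - f1 x - inner (d1 x) (y - x)) / norm (y - x) - (f2 y - f2 x - inner (d2 x) (y - x)) / norm (y - x)) \<longlongrightarrow> 0 - 0) F"
    by (rule tendsto_diff[OF assms])
  moreover have "(\<lambda>y. (f1 y - f1 x - inner (d1 x) (y - x)) / norm (y - x) - (f2 y - f2 x - inner (d2 x) (y - x)) / norm (y - x))
     = (\<lambda>y. ((f1 y - f2 y) - (f1 x - f2 x) - inner (d1 x - d2 x) (y - x)) / norm (y - x))"
    by (rule ext) (simp add: diff_divide_distrib[symmetric] inner_diff_left algebra_simps)
  ultimately show ?thesis by simp
qed

theorem mainTheorem6:
  fixes K :: "'a::euclidean_space set"
  assumes "compact K" and "pointwise_whitney_regular K"
  shows "\<forall>F :: nat \<Rightarrow> ('a \<Rightarrow> real) \<times> ('a \<Rightarrow> 'a).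
           (\<forall>n. F n \<in> jet_space K) \<and>
           (\<forall>e>0. \<exists>N. \<forall>m\<ge>N. \<forall>n\<ge>N.
              jet_norm K (\<lambda>x. fst (F m) x - fst (F n) x, \<lambda>x. snd (F m) x - snd (F n) x) < e)
           \<longrightarrow> (\<exists>G\<in>jet_space K.
                 (\<lambda>n. jet_norm K (\<lambda>x. fst (F n) x - fst G x, \<lambda>x. snd (F n) x - snd G x))
                 \<longlonglongrightarrow> 0)"
proof (intro allI impI, elim conjE)
  fix F :: "nat \<Rightarrow> ('a \<Rightarrow> real) \<times> ('a \<Rightarrow> 'a)"
  assume Fj: "\<forall>n. F n \<in> jet_space K"
    and cau: "\<forall>e>0. \<exists>N. \<forall>m\<ge>N. \<forall>n\<ge>N.
              jet_norm K (\<lambda>x. fst (F m) x - fst (F n) x, \<lambda>x. snd (F m) x - snd (F n) x) < e"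
  define fs where "fs n = fst (F n)" for n
  define dfs where "dfs n = snd (F n)" for n
  have cf: "continuous_on K (fs n)" and cd: "is_cont_deriv_on K (fs n) (dfs n)" for n
    using Fj[rule_format, of n] unfolding jet_space_def fs_def dfs_def by (cases "F n"; auto)+
  have cdf: "continuous_on K (dfs n)" for n using cd[of n] unfolding is_cont_deriv_on_def by auto
  have dfs_der: "\<forall>x\<in>K. ((\<lambda>y. (fs n y - fs n x - inner (dfs n x) (y - x)) / norm (y - x)) \<longlongrightarrow> 0) (at x within K)" for n
    using cd[of n] unfolding is_cont_deriv_on_def by auto
  have cb: "\<exists>N. \<forall>m\<ge>N. \<forall>n\<ge>N. \<forall>x\<in>K. \<bar>fs m x - fs n x\<bar> < e \<and> norm (dfs m x - dfs n x) < e"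
    if e: "e > 0" for e
  proof -
    obtain N where N: "\<forall>m\<ge>N. \<forall>n\<ge>N. jet_norm K (\<lambda>x. fs m x - fs n x, \<lambda>x. dfs m x - dfs n x) < e"
      using cau e unfolding fs_def dfs_def by blast
    show ?thesis
    proof (intro exI[of _ N] allI impI ballI)
      fix m n x assume mn: "m \<ge> N" "n \<ge> N" and x: "x \<in> K"
      have c1: "continuous_on K (\<lambda>x. fs m x - fs n x)" by (intro continuous_intros cf)
      have c2: "continuous_on K (\<lambda>x. dfs m x - dfs n x)" by (intro continuous_intros cdf)
      have "jet_norm K (\<lambda>x. fs m x - fs n x, \<lambda>x. dfs m x - dfs n x)
          = sup_norm_on K (\<lambda>x. fs m x - fs n x) + sup_norm_on K (\<lambda>x. dfs m x - dfs n x)"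
        by (simp add: jet_norm_def)
      moreover have "\<bar>fs m x - fs n x\<bar> \<le> sup_norm_on K (\<lambda>x. fs m x - fs n x)"
        using sup_norm_ge[OF c1 assms(1) x] by simp
      moreover have "norm (dfs m x - dfs n x) \<le> sup_norm_on K (\<lambda>x. dfs m x - dfs n x)"
        using sup_norm_ge[OF c2 assms(1) x] by simp
      moreover note sup_norm_nonneg[OF c1 assms(1)] sup_norm_nonneg[OF c2 assms(1)]
      moreover have "jet_norm K (\<lambda>x. fs m x - fs n x, \<lambda>x. dfs m x - dfs n x) < e"
        using N mn by blast
      ultimately show "\<bar>fs m x - fs n x\<bar> < e \<and> norm (dfs m x - dfs n x) < e"
        by linarith
    qed
  qed
  have "uniformly_Cauchy_on K fs"
    unfolding uniformly_Cauchy_on_def dist_real_def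
    by (metis cb)
  then obtain f where uf: "uniform_limit K fs f sequentially"
    using Cauchy_uniformly_convergent unfolding uniformly_convergent_on_def by blast
  have "uniformly_Cauchy_on K dfs"
    unfolding uniformly_Cauchy_on_def dist_norm
    by (metis cb)
  then obtain g where ug: "uniform_limit K dfs g sequentially"
    using Cauchy_uniformly_convergent unfolding uniformly_convergent_on_def by blast
  have contf: "continuous_on K f"
    by (rule uniform_limit_theorem[OF _ uf]) (auto simp: cf)
  have contg: "continuous_on K g"
    by (rule uniform_limit_theorem[OF _ ug]) (auto simp: cdf)
  have ubf: "\<exists>N. \<forall>n\<ge>N. \<forall>x\<in>K. \<bar>fs n x - f x\<bar> < e" if "e > 0" for e
    using uf that unfolding uniform_limit_iff eventually_sequentially dist_real_def by blast
  have ubg: "\<exists>N. \<forall>n\<ge>N. \<forall>x\<in>K. norm (dfs n x - g x) < e" if "e > 0" for e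
    using ug that unfolding uniform_limit_iff eventually_sequentially dist_norm by blast
  have ptf: "(\<lambda>n. fs n x) \<longlonglongrightarrow> f x" if "x \<in> K" for x
    by (rule tendsto_uniform_limitI[OF uf that])
  have derf: "((\<lambda>y. (f y - f x - inner (g x) (y - x)) / norm (y - x)) \<longlongrightarrow> 0) (at x within K)"
    if xK: "x \<in> K" for x
  proof -
    obtain V C where V: "open V" "x \<in> V" and C: "C > 0" and
      paths: "\<forall>y\<in>V \<inter> K. \<exists>\<gamma> a b. rectifiable_path_in K \<gamma> a b \<and> \<gamma> a = x \<and> \<gamma> b = y
        \<and> path_length \<gamma> a b \<le> C * dist x y"
      using assms(2) xK unfolding pointwise_whitney_regular_def by blast
    obtain r where r: "r > 0" "ball x r \<subseteq> V" using V open_contains_ball by blast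
    show ?thesis unfolding Lim_within
    proof (intro allI impI)
      fix e :: real assume e: "e > 0"
      define \<eta> where "\<eta> = e / (2 * (C + 2))"
      have \<eta>: "\<eta> > 0" unfolding \<eta>_def using e C by simp
      have \<eta>e: "\<eta> * (C + 2) = e / 2" unfolding \<eta>_def using C by (simp add: field_simps)
      obtain N1 where N1: "\<forall>m\<ge>N1. \<forall>n\<ge>N1. \<forall>z\<in>K. norm (dfs m z - dfs n z) < \<eta>"
        using cb[OF \<eta>] by blast
      obtain N2 where N2: "\<forall>n\<ge>N2. \<forall>z\<in>K. norm (dfs n z - g z) < \<eta>"
        using ubg[OF \<eta>] by blast
      define n where "n = max N1 N2"
      obtain \<rho> where \<rho>: "\<rho> > 0" and \<rho>b: "\<forall>y\<in>K. 0 < dist y x \<and> dist y x < \<rho> \<longrightarrow>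
          dist ((fs n y - fs n x - inner (dfs n x) (y - x)) / norm (y - x)) 0 < \<eta>"
        using dfs_der[of n, rule_format, OF xK] \<eta> unfolding Lim_within by blast
      show "\<exists>d>0. \<forall>y\<in>K. 0 < dist y x \<and> dist y x < d \<longrightarrow>
          dist ((f y - f x - inner (g x) (y - x)) / norm (y - x)) 0 < e"
      proof (intro exI[of _ "min r \<rho>"] conjI ballI impI)
        show "0 < min r \<rho>" using r \<rho> by simp
        fix y assume yK: "y \<in> K" and y: "0 < dist y x \<and> dist y x < min r \<rho>"
        have n0: "norm (y - x) > 0" using y by (simp add: dist_norm)
        have "y \<in> V" using r y by (auto simp: dist_commute)
        then obtain \<gamma> a b where rp: "rectifiable_path_in K \<gamma> a b" and ga: "\<gamma> a = x" and gb: "\<gamma> b = y"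
          and pl: "path_length \<gamma> a b \<le> C * dist x y"
          using paths yK by blast
        have mv: "\<bar>(fs n y - fs m y) - (fs n x - fs m x)\<bar> \<le> \<eta> * C * norm (y - x)" if m: "m \<ge> N1" for m
        proof -
          have d: "\<forall>z\<in>K. ((\<lambda>w. ((fs n w - fs m w) - (fs n z - fs m z) - inner (dfs n z - dfs m z) (w - z)) / norm (w - z)) \<longlongrightarrow> 0) (at z within K)"
            using deriv_diff dfs_der by blast
          have bd: "\<forall>z\<in>K. norm (dfs n z - dfs m z) \<le> \<eta>"
            using N1 m unfolding n_def by (auto intro: less_imp_le)
          have "\<bar>(fs n (\<gamma> b) - fs m (\<gamma> b)) - (fs n (\<gamma> a) - fs m (\<gamma> a))\<bar> \<le> \<eta> * path_length \<gamma> a b"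
            using MVI[of K "\<lambda>z. fs n z - fs m z" "\<lambda>z. dfs n z - dfs m z" \<eta> \<gamma> a b, OF d bd rp] by simp
          hence "\<bar>(fs n y - fs m y) - (fs n x - fs m x)\<bar> \<le> \<eta> * path_length \<gamma> a b"
            using ga gb by simp
          also have "\<dots> \<le> \<eta> * (C * dist x y)" using pl \<eta> by (intro mult_left_mono) auto
          finally show ?thesis by (simp add: dist_norm norm_minus_commute mult.assoc)
        qed
        have lim: "(\<lambda>m. \<bar>(fs n y - fs m y) - (fs n x - fs m x)\<bar>) \<longlonglongrightarrow> \<bar>(fs n y - f y) - (fs n x - f x)\<bar>"
          by (intro tendsto_intros ptf xK yK)
        have A1: "\<bar>(fs n y - f y) - (fs n x - f x)\<bar> \<le> \<eta> * C * norm (y - x)"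
          by (rule LIMSEQ_le_const2[OF lim]) (use mv in blast)
        have "\<bar>(fs n y - fs n x - inner (dfs n x) (y - x)) / norm (y - x)\<bar> < \<eta>"
          using \<rho>b yK y by auto
        hence A2: "\<bar>fs n y - fs n x - inner (dfs n x) (y - x)\<bar> \<le> \<eta> * norm (y - x)"
          using n0 by (simp add: abs_divide divide_less_eq less_imp_le)
        have "\<bar>inner (dfs n x - g x) (y - x)\<bar> \<le> norm (dfs n x - g x) * norm (y - x)"
          by (rule Cauchy_Schwarz_ineq2)
        also have "\<dots> \<le> \<eta> * norm (y - x)"
          using N2 xK unfolding n_def by (intro mult_right_mono) (auto intro: less_imp_le)
        finally have A3: "\<bar>inner (dfs n x - g x) (y - x)\<bar> \<le> \<eta> * norm (y - x)" .
        have eq: "f y - f x - inner (g x) (y - x) = - ((fs n y - f y) - (fs n x - f x))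
            + (fs n y - fs n x - inner (dfs n x) (y - x)) + inner (dfs n x - g x) (y - x)"
          by (simp add: inner_diff_left)
        have "\<bar>f y - f x - inner (g x) (y - x)\<bar> \<le> \<eta> * C * norm (y - x) + \<eta> * norm (y - x) + \<eta> * norm (y - x)"
          unfolding eq using A1 A2 A3 by linarith
        also have "\<dots> = (\<eta> * (C + 2)) * norm (y - x)" by (simp add: algebra_simps)
        also have "\<dots> = e / 2 * norm (y - x)" by (simp only: \<eta>e)
        finally have "\<bar>f y - f x - inner (g x) (y - x)\<bar> / norm (y - x) \<le> e / 2"
          using n0 by (simp add: divide_le_eq)
        hence "\<bar>f y - f x - inner (g x) (y - x)\<bar> / norm (y - x) < e" using e by linarith
        thus "dist ((f y - f x - inner (g x) (y - x)) / norm (y - x)) 0 < e"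
          by (simp add: abs_divide)
      qed
    qed
  qed
  have Gj: "(f, g) \<in> jet_space K"
    unfolding jet_space_def is_cont_deriv_on_def using contf contg derf by auto
  have conv: "(\<lambda>n. jet_norm K (\<lambda>x. fst (F n) x - fst (f, g) x, \<lambda>x. snd (F n) x - snd (f, g) x)) \<longlonglongrightarrow> 0"
  proof (rule LIMSEQ_I)
    fix e :: real assume e: "0 < e"
    obtain N1 where N1: "\<forall>n\<ge>N1. \<forall>x\<in>K. \<bar>fs n x - f x\<bar> < e/4" using ubf[of "e/4"] e by auto
    obtain N2 where N2: "\<forall>n\<ge>N2. \<forall>x\<in>K. norm (dfs n x - g x) < e/4" using ubg[of "e/4"] e by auto
    show "\<exists>no. \<forall>n\<ge>no. norm (jet_norm K (\<lambda>x. fst (F n) x - fst (f, g) x, \<lambda>x. snd (F n) x - snd (f, g) x) - 0) < e"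
    proof (intro exI[of _ "max N1 N2"] allI impI)
      fix n assume n: "max N1 N2 \<le> n"
      have c1: "continuous_on K (\<lambda>x. fs n x - f x)" by (intro continuous_intros cf contf)
      have c2: "continuous_on K (\<lambda>x. dfs n x - g x)" by (intro continuous_intros cdf contg)
      have s1: "sup_norm_on K (\<lambda>x. fs n x - f x) \<le> e/4"
        using N1 n e by (intro sup_norm_le) (auto intro: less_imp_le)
      have s2: "sup_norm_on K (\<lambda>x. dfs n x - g x) \<le> e/4"
        using N2 n e by (intro sup_norm_le) (auto intro: less_imp_le)
      have "jet_norm K (\<lambda>x. fst (F n) x - fst (f, g) x, \<lambda>x. snd (F n) x - snd (f, g) x)
          = sup_norm_on K (\<lambda>x. fs n x - f x) + sup_norm_on K (\<lambda>x. dfs n x - g x)"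
        by (simp add: jet_norm_def fs_def dfs_def)
      thus "norm (jet_norm K (\<lambda>x. fst (F n) x - fst (f, g) x, \<lambda>x. snd (F n) x - snd (f, g) x) - 0) < e"
        using s1 s2 sup_norm_nonneg[OF c1 assms(1)] sup_norm_nonneg[OF c2 assms(1)] e by simp
    qed
  qed
  show "\<exists>G\<in>jet_space K. (\<lambda>n. jet_norm K (\<lambda>x. fst (F n) x - fst G x, \<lambda>x. snd (F n) x - snd G x)) \<longlonglongrightarrow> 0"
    using Gj conv by blast
qed

end
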